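(* Let $G=(V,E)$ be a finite graph (parallel edges and loops allowed) and let $e\neq f$ be two edges of $G$. Then, as polynomials in the variables $\{x_g : g\in E\setminus\{e,f\}\}$, \[ \mathcal{M}_{ef}(1) \;=\; \sum_{\beta,\gamma}\Big(\mathbf{x}^{\beta}\mathbf{x}^{\gamma}\sum_{\mathbf{m}\in B_{\beta,\gamma}} \mathbf{m}\Big), \] where the outer sum runs over all ordered pairs $(\beta,\gamma)$ of disjoint subsets of $E\setminus\{e,f\}$.
   Context: Let $\{x_g : g\in E\}$ be variables (positive reals). For $F\subseteq E$ write $\mathbf{x}^F=\prod_{g\in F}x_g$ and let $k(F)$ be the number of connected components of the spanning subgraph $(V,F)$. For $A,B\subseteq E$ set $\mathcal{T}_A^B=\sum_{F\subseteq E:\,A\subseteq F,\,F\cap B=\varnothing}\mathbf{x}^F q^{k(F)}$. Write $\mathcal{T}_e^f=\mathcal{T}_{\{e\}}^{\{f\}}$, $\mathcal{T}_f^e=\mathcal{T}_{\{f\}}^{\{e\}}$, $\mathcal{T}_{ef}=\mathcal{T}_{\{e,f\}}^{\varnothing}$, $\mathcal{T}^{ef}=\mathcal{T}_{\varnothing}^{\{e,f\}}$. The difference $\mathcal{T}_e^f\mathcal{T}_f^e-\mathcal{T}_{ef}\mathcal{T}^{ef}$ is divisible by $x_ex_f(1-q)$, and $\mathcal{M}_{ef}(q):=(\mathcal{T}_e^f\mathcal{T}_f^e-\mathcal{T}_{ef}\mathcal{T}^{ef})/(x_ex_f(1-q))$; $\mathcal{M}_{ef}(1)$ is this polynomial evaluated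 at $q=1$. Let $E^{ef}=E\setminus\{e,f\}$. A subset $F\subseteq E^{ef}$ is a paracel if $e$ and $f$ both join the same two distinct connected components of $(V,F)$; equivalently $(V,F+e)$ and $(V,F+f)$ have the same connected components (as vertex sets) and $k(F+e)=k(F+f)=k(F)-1$. For a paracel $F$, an edge of $E^{ef}\setminus F$ is a smoot for $F$ if it also joins those same two components of $(V,F)$. Given disjoint $\beta,\gamma\subseteq E^{ef}$, a subset $\alpha\subseteq E^{ef}$ is compatible with $\beta,\gamma$ if $\alpha$ is disjoint from $\beta$ and $\gamma$, $\gamma\cup\alpha$ is a paracel, and every edge of $\beta$ is a smoot for $\gamma\cup\alpha$. Let $A_{\beta,\gamma}$ be the set of such $\alpha$. Two elements $\alpha,\alpha'\in A_{\beta,\gamma}$ (possibly equal) are twins if $\alpha\cap\alpha'\in A_{\beta,\gamma}$. $B_{\beta,\gamma}$ is the set (each monomial counted once) of monomials of the form $\mathbf{x}^{\alpha}\mathbf{x}^{\alpha'}$ with $\alpha,\alpha'$ twins in $A_{\beta,\gamma}$. *)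

theory Defs
  imports "HOL-Computational_Algebra.Polynomial" "HOL-Library.Multiset"
begin

text \<open>A finite multigraph (parallel edges and loops allowed) is given by a vertex set V,
  an edge set E and an endpoint map ends :: 'e => 'v * 'v (a loop has equal endpoints).\<close>

definition adj :: "('e \<Rightarrow> 'v \<times> 'v) \<Rightarrow> 'e set \<Rightarrow> ('v \<times> 'v) set" where
  "adj ends F = {(fst (ends g), snd (ends g)) | g. g \<in> F} \<union> {(snd (ends g), fst (ends g)) | g. g \<in> F}"

definition conn :: "'v set \<Rightarrow> ('e \<Rightarrow> 'v \<times> 'v) \<Rightarrow> 'e set \<Rightarrow> ('v \<times> 'v) set" where
  "conn V ends F = {(u, w). u \<in> V \<and> w \<in> V \<and> (u, w) \<in> (adj ends F)\<^sup>*}"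

definition comp :: "'v set \<Rightarrow> ('e \<Rightarrow> 'v \<times> 'v) \<Rightarrow> 'e set \<Rightarrow> 'v \<Rightarrow> 'v set" where
  "comp V ends F v = conn V ends F `` {v}"

definition ncomp :: "'v set \<Rightarrow> ('e \<Rightarrow> 'v \<times> 'v) \<Rightarrow> 'e set \<Rightarrow> nat" where
  "ncomp V ends F = card (V // conn V ends F)"

definition joins :: "'v set \<Rightarrow> ('e \<Rightarrow> 'v \<times> 'v) \<Rightarrow> 'e set \<Rightarrow> 'e \<Rightarrow> 'v set set" where
  "joins V ends F g = {comp V ends F (fst (ends g)), comp V ends F (snd (ends g))}"

definition monoF :: "('e \<Rightarrow> real) \<Rightarrow> 'e set \<Rightarrow> real" where
  "monoF x F = (\<Prod>g\<in>F. x g)"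

definition TAB :: "'v set \<Rightarrow> 'e set \<Rightarrow> ('e \<Rightarrow> 'v \<times> 'v) \<Rightarrow> ('e \<Rightarrow> real) \<Rightarrow> 'e set \<Rightarrow> 'e set \<Rightarrow> real poly" where
  "TAB V E ends x A B = (\<Sum>F\<in>{F. F \<subseteq> E \<and> A \<subseteq> F \<and> F \<inter> B = {}}. monom (monoF x F) (ncomp V ends F))"

text \<open>M_ef(q) = (T_e^f T_f^e - T_ef T^ef) / (x_e x_f (1-q)).\<close>
definition Mef :: "'v set \<Rightarrow> 'e set \<Rightarrow> ('e \<Rightarrow> 'v \<times> 'v) \<Rightarrow> ('e \<Rightarrow> real) \<Rightarrow> 'e \<Rightarrow> 'e \<Rightarrow> real poly" where
  "Mef V E ends x e f =
     (TAB V E ends x {e} {f} * TAB V E ends x {f} {e} - TAB V E ends x {e, f} {} * TAB V E ends x {} {e, f})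
       div [: x e * x f, - (x e * x f) :]"

definition paracel :: "'v set \<Rightarrow> 'e set \<Rightarrow> ('e \<Rightarrow> 'v \<times> 'v) \<Rightarrow> 'e \<Rightarrow> 'e \<Rightarrow> 'e set \<Rightarrow> bool" where
  "paracel V E ends e f F \<longleftrightarrow> F \<subseteq> E - {e, f} \<and>
     comp V ends F (fst (ends e)) \<noteq> comp V ends F (snd (ends e)) \<and>
     joins V ends F f = joins V ends F e"

definition smoot :: "'v set \<Rightarrow> 'e set \<Rightarrow> ('e \<Rightarrow> 'v \<times> 'v) \<Rightarrow> 'e \<Rightarrow> 'e \<Rightarrow> 'e set \<Rightarrow> 'e \<Rightarrow> bool" where
  "smoot V E ends e f F g \<longleftrightarrow> g \<in> (E - {e, f}) - F \<and> joins V ends F g = joins V ends F e"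

definition compat_set :: "'v set \<Rightarrow> 'e set \<Rightarrow> ('e \<Rightarrow> 'v \<times> 'v) \<Rightarrow> 'e \<Rightarrow> 'e \<Rightarrow> 'e set \<Rightarrow> 'e set \<Rightarrow> 'e set set" where
  "compat_set V E ends e f \<beta> \<gamma> = {\<alpha>. \<alpha> \<subseteq> E - {e, f} \<and> \<alpha> \<inter> \<beta> = {} \<and> \<alpha> \<inter> \<gamma> = {} \<and>
      paracel V E ends e f (\<gamma> \<union> \<alpha>) \<and> (\<forall>b\<in>\<beta>. smoot V E ends e f (\<gamma> \<union> \<alpha>) b)}"

text \<open>B_{beta,gamma}: set of monomials x^alpha x^alpha' (represented as multisets of edges,
  so each monomial is counted once) with alpha, alpha' twins.\<close>
definition Bset :: "'v set \<Rightarrow> 'e set \<Rightarrow> ('e \<Rightarrow> 'v \<times> 'v) \<Rightarrow> 'e \<Rightarrow> 'e \<Rightarrow> 'e set \<Rightarrow> 'e set \<Rightarrow> 'e multiset set" where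
  "Bset V E ends e f \<beta> \<gamma> = {mset_set \<alpha> + mset_set \<alpha>' | \<alpha> \<alpha>'.
      \<alpha> \<in> compat_set V E ends e f \<beta> \<gamma> \<and> \<alpha>' \<in> compat_set V E ends e f \<beta> \<gamma> \<and>
      \<alpha> \<inter> \<alpha>' \<in> compat_set V E ends e f \<beta> \<gamma>}"

definition eval_monomial :: "('e \<Rightarrow> real) \<Rightarrow> 'e multiset \<Rightarrow> real" where
  "eval_monomial x m = (\<Prod>g\<in>set_mset m. x g ^ count m g)"

end

theory Submission
  imports Defs
begin
lemma adj_sym: "(p,q) \<in> adj ends F \<Longrightarrow> (q,p) \<in> adj ends F"
  unfolding adj_def by blast

lemma adj_mono: "F \<subseteq> F' \<Longrightarrow> adj ends F \<subseteq> adj ends F'"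
  unfolding adj_def by blast

lemma adj_insert: "adj ends (insert g F) = adj ends F \<union> {(fst (ends g), snd (ends g)), (snd (ends g), fst (ends g))}"
  unfolding adj_def by blast

lemma rtr_sym: "(p,q) \<in> (adj ends F)\<^sup>* \<Longrightarrow> (q,p) \<in> (adj ends F)\<^sup>*"
proof -
  have "sym (adj ends F)" unfolding sym_def using adj_sym[of _ _ ends F] by blast
  hence "sym ((adj ends F)\<^sup>*)" by (rule sym_rtrancl)
  thus "(p,q) \<in> (adj ends F)\<^sup>* \<Longrightarrow> (q,p) \<in> (adj ends F)\<^sup>*" unfolding sym_def by blast
qed


lemma conn_mono: "F \<subseteq> F' \<Longrightarrow> conn V ends F \<subseteq> conn V ends F'"
  unfolding conn_def using rtrancl_mono[OF adj_mono[of F F' ends]] by auto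

lemma conn_edge: "g \<in> F \<Longrightarrow> fst (ends g) \<in> V \<Longrightarrow> snd (ends g) \<in> V \<Longrightarrow> (fst (ends g), snd (ends g)) \<in> conn V ends F"
proof -
  assume "g \<in> F" "fst (ends g) \<in> V" "snd (ends g) \<in> V"
  moreover have "(fst (ends g), snd (ends g)) \<in> adj ends F" unfolding adj_def using \<open>g \<in> F\<close> by auto
  ultimately show ?thesis unfolding conn_def by auto
qed

lemma conn_sym: "(p,q) \<in> conn V ends F \<Longrightarrow> (q,p) \<in> conn V ends F"
  unfolding conn_def using rtr_sym[of p q ends F] by auto

lemma conn_trans: "(p,q) \<in> conn V ends F \<Longrightarrow> (q,r) \<in> conn V ends F \<Longrightarrow> (p,r) \<in> conn V ends F"
  unfolding conn_def using rtrancl_trans[of p q "adj ends F" r] by auto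

lemma conn_refl: "p \<in> V \<Longrightarrow> (p,p) \<in> conn V ends F"
  unfolding conn_def by auto

lemma conn_V: "(p,q) \<in> conn V ends F \<Longrightarrow> p \<in> V \<and> q \<in> V"
  unfolding conn_def by auto

lemma conn_equiv: "equiv V (conn V ends F)"
proof (rule equivI)
  show "conn V ends F \<subseteq> V \<times> V" unfolding conn_def by auto
  show "refl_on V (conn V ends F)" unfolding refl_on_def conn_def by auto
  show "sym (conn V ends F)" by (rule symI) (rule conn_sym)
  show "trans (conn V ends F)" by (rule transI) (rule conn_trans)
qed

lemma comp_eq_iff: "p \<in> V \<Longrightarrow> q \<in> V \<Longrightarrow> comp V ends F p = comp V ends F q \<longleftrightarrow> (p,q) \<in> conn V ends F"
  unfolding comp_def by (rule eq_equiv_class_iff[OF conn_equiv])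

lemma rt_insert:
  fixes A :: "('v \<times> 'v) set"
  assumes sym: "\<And>p q. (p,q) \<in> A \<Longrightarrow> (q,p) \<in> A"
    and "(p,q) \<in> (A \<union> {(a,b),(b,a)})\<^sup>*"
  shows "(p,q) \<in> A\<^sup>* \<or> ((p,a) \<in> A\<^sup>* \<and> (b,q) \<in> A\<^sup>*) \<or> ((p,b) \<in> A\<^sup>* \<and> (a,q) \<in> A\<^sup>*)"
  using assms(2)
proof (induction rule: rtrancl_induct)
  case base
  then show ?case by simp
next
  case (step y z)
  have symr: "\<And>p q. (p,q) \<in> A\<^sup>* \<Longrightarrow> (q,p) \<in> A\<^sup>*"
  proof -
    have "sym A" unfolding sym_def using sym by blast
    hence "sym (A\<^sup>*)" by (rule sym_rtrancl)
    thus "\<And>p q. (p,q) \<in> A\<^sup>* \<Longrightarrow> (q,p) \<in> A\<^sup>*" unfolding sym_def by blast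
  qed
  from step.hyps(2) consider "(y,z) \<in> A" | "y = a" "z = b" | "y = b" "z = a" by blast
  then show ?case
  proof cases
    case 1
    then show ?thesis using step.IH by (meson rtrancl.rtrancl_into_rtrancl)
  next
    case 2
    have "(p,a) \<in> A\<^sup>* \<or> (p,b) \<in> A\<^sup>*"
      using step.IH 2 by blast
    then show ?thesis using 2 by auto
  next
    case 3
    have "(p,a) \<in> A\<^sup>* \<or> (p,b) \<in> A\<^sup>*"
      using step.IH 3 by blast
    then show ?thesis using 3 by auto
  qed
qed

lemma conn_insert:
  assumes "fst (ends g) \<in> V" "snd (ends g) \<in> V"
  shows "(p,q) \<in> conn V ends (insert g F) \<longleftrightarrow>
    (p,q) \<in> conn V ends F \<or>
    ((p, fst (ends g)) \<in> conn V ends F \<and> (snd (ends g), q) \<in> conn V ends F) \<or>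
    ((p, snd (ends g)) \<in> conn V ends F \<and> (fst (ends g), q) \<in> conn V ends F)"
proof
  assume h: "(p,q) \<in> conn V ends (insert g F)"
  hence "(p,q) \<in> (adj ends F \<union> {(fst (ends g), snd (ends g)), (snd (ends g), fst (ends g))})\<^sup>*"
    and pq: "p \<in> V" "q \<in> V"
    unfolding conn_def adj_insert by auto
  from rt_insert[OF adj_sym this(1)] show "(p,q) \<in> conn V ends F \<or>
    ((p, fst (ends g)) \<in> conn V ends F \<and> (snd (ends g), q) \<in> conn V ends F) \<or>
    ((p, snd (ends g)) \<in> conn V ends F \<and> (fst (ends g), q) \<in> conn V ends F)"
    using pq assms unfolding conn_def by auto
next
  have ed: "(fst (ends g), snd (ends g)) \<in> conn V ends (insert g F)"
    by (rule conn_edge) (use assms in auto)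
  have m: "conn V ends F \<subseteq> conn V ends (insert g F)" by (rule conn_mono) auto
  assume "(p,q) \<in> conn V ends F \<or>
    ((p, fst (ends g)) \<in> conn V ends F \<and> (snd (ends g), q) \<in> conn V ends F) \<or>
    ((p, snd (ends g)) \<in> conn V ends F \<and> (fst (ends g), q) \<in> conn V ends F)"
  then show "(p,q) \<in> conn V ends (insert g F)"
  proof (elim disjE conjE)
    assume "(p,q) \<in> conn V ends F" thus ?thesis using m by blast
  next
    assume "(p, fst (ends g)) \<in> conn V ends F" "(snd (ends g), q) \<in> conn V ends F"
    thus ?thesis using m ed conn_trans[of p "fst (ends g)" V ends "insert g F" "snd (ends g)"]
       conn_trans[of p "snd (ends g)" V ends "insert g F" q] by blast
  next
    assume "(p, snd (ends g)) \<in> conn V ends F" "(fst (ends g), q) \<in> conn V ends F"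
    thus ?thesis using m conn_sym[OF ed] conn_trans[of p "snd (ends g)" V ends "insert g F" "fst (ends g)"]
       conn_trans[of p "fst (ends g)" V ends "insert g F" q] by blast
  qed
qed

lemma conn_insert_same:
  assumes "fst (ends g) \<in> V" "snd (ends g) \<in> V" "(fst (ends g), snd (ends g)) \<in> conn V ends F"
  shows "conn V ends (insert g F) = conn V ends F"
proof (intro set_eqI iffI)
  fix pq assume "pq \<in> conn V ends (insert g F)"
  then obtain p q where pq: "pq = (p,q)" "(p,q) \<in> conn V ends (insert g F)" by (cases pq) auto
  have ab: "(fst (ends g), snd (ends g)) \<in> conn V ends F" "(snd (ends g), fst (ends g)) \<in> conn V ends F"
    using assms(3) conn_sym[OF assms(3)] by auto
  from pq(2)[unfolded conn_insert[where ends=ends and g=g and V=V, OF assms(1,2)]] have "(p,q) \<in> conn V ends F"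
  proof (elim disjE conjE)
    assume "(p, fst (ends g)) \<in> conn V ends F" "(snd (ends g), q) \<in> conn V ends F"
    thus ?thesis using ab conn_trans[of p "fst (ends g)" V ends F "snd (ends g)"] conn_trans[of p "snd (ends g)" V ends F q] by blast
  next
    assume "(p, snd (ends g)) \<in> conn V ends F" "(fst (ends g), q) \<in> conn V ends F"
    thus ?thesis using ab conn_trans[of p "snd (ends g)" V ends F "fst (ends g)"] conn_trans[of p "fst (ends g)" V ends F q] by blast
  qed
  thus "pq \<in> conn V ends F" using pq(1) by simp
next
  fix pq assume "pq \<in> conn V ends F" thus "pq \<in> conn V ends (insert g F)"
    using conn_mono[of F "insert g F"] by blast
qed

lemma class_insert:
  assumes a: "fst (ends g) \<in> V" and b: "snd (ends g) \<in> V" and nc: "(fst (ends g), snd (ends g)) \<notin> conn V ends F"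
    and p: "p \<in> V"
  shows "conn V ends (insert g F) `` {p} =
    (if p \<in> conn V ends F `` {fst (ends g)} \<union> conn V ends F `` {snd (ends g)}
     then conn V ends F `` {fst (ends g)} \<union> conn V ends F `` {snd (ends g)}
     else conn V ends F `` {p})"
proof -
  let ?R = "conn V ends F" and ?a = "fst (ends g)" and ?b = "snd (ends g)"
  have key: "\<And>q. q \<in> conn V ends (insert g F) `` {p} \<longleftrightarrow>
      (p,q) \<in> ?R \<or> ((p, ?a) \<in> ?R \<and> (?b, q) \<in> ?R) \<or> ((p, ?b) \<in> ?R \<and> (?a, q) \<in> ?R)"
    using conn_insert[where ends=ends and g=g and V=V, OF a b] by simp
  show ?thesis
  proof (cases "p \<in> ?R `` {?a} \<union> ?R `` {?b}")
    case True
    then consider "(?a,p) \<in> ?R" | "(?b,p) \<in> ?R" by blast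
    then show ?thesis
    proof cases
      case 1
      have pa: "(p, ?a) \<in> ?R" using conn_sym[OF 1] .
      have npb: "(p, ?b) \<notin> ?R"
      proof
        assume "(p, ?b) \<in> ?R" thus False using nc conn_trans[OF 1] by blast
      qed
      have "conn V ends (insert g F) `` {p} = ?R `` {?a} \<union> ?R `` {?b}"
      proof (rule set_eqI)
        fix q
        have e1: "(p,q) \<in> ?R \<longleftrightarrow> (?a,q) \<in> ?R" using conn_trans[OF 1, of q] conn_trans[OF pa, of q] by blast
        have e2: "q \<in> ?R `` {?a} \<union> ?R `` {?b} \<longleftrightarrow> (?a,q) \<in> ?R \<or> (?b,q) \<in> ?R" by simp
        show "q \<in> conn V ends (insert g F) `` {p} \<longleftrightarrow> q \<in> ?R `` {?a} \<union> ?R `` {?b}"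
          unfolding key[of q] e2 using e1 npb pa by blast
      qed
      then show ?thesis using True by simp
    next
      case 2
      have pb: "(p, ?b) \<in> ?R" using conn_sym[OF 2] .
      have npa: "(p, ?a) \<notin> ?R"
      proof
        assume "(p, ?a) \<in> ?R" thus False using nc conn_sym[OF conn_trans[OF 2]] by blast
      qed
      have "conn V ends (insert g F) `` {p} = ?R `` {?a} \<union> ?R `` {?b}"
      proof (rule set_eqI)
        fix q
        have e1: "(p,q) \<in> ?R \<longleftrightarrow> (?b,q) \<in> ?R" using conn_trans[OF 2, of q] conn_trans[OF pb, of q] by blast
        have e2: "q \<in> ?R `` {?a} \<union> ?R `` {?b} \<longleftrightarrow> (?a,q) \<in> ?R \<or> (?b,q) \<in> ?R" by simp
        show "q \<in> conn V ends (insert g F) `` {p} \<longleftrightarrow> q \<in> ?R `` {?a} \<union> ?R `` {?b}"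
          unfolding key[of q] e2 using e1 npa pb by blast
      qed
      then show ?thesis using True by simp
    qed
  next
    case False
    have "(p, ?a) \<notin> ?R"
    proof
      assume "(p, ?a) \<in> ?R" thus False using False conn_sym[of p ?a V ends F] by blast
    qed
    moreover have "(p, ?b) \<notin> ?R"
    proof
      assume "(p, ?b) \<in> ?R" thus False using False conn_sym[of p ?b V ends F] by blast
    qed
    ultimately have "conn V ends (insert g F) `` {p} = ?R `` {p}"
      using key by auto
    then show ?thesis using False by simp
  qed
qed

lemma class_eq_mem:
  assumes "q \<in> conn V ends F `` {p}" shows "conn V ends F `` {q} = conn V ends F `` {p}"
proof -
  have pq: "(p,q) \<in> conn V ends F" using assms by simp
  hence "p \<in> V" "q \<in> V" using conn_V[OF pq] by auto
  thus ?thesis using comp_eq_iff[of q V p ends F] conn_sym[OF pq] unfolding comp_def by simp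
qed

lemma ncomp_insert:
  assumes fin: "finite V" and a: "fst (ends g) \<in> V" and b: "snd (ends g) \<in> V"
  shows "real (ncomp V ends (insert g F)) = real (ncomp V ends F) -
     (if (fst (ends g), snd (ends g)) \<in> conn V ends F then 0 else 1)"
proof (cases "(fst (ends g), snd (ends g)) \<in> conn V ends F")
  case True
  then show ?thesis unfolding ncomp_def using conn_insert_same[OF a b True] by simp
next
  case False
  let ?R = "conn V ends F" and ?a = "fst (ends g)" and ?b = "snd (ends g)"
  let ?Ca = "?R `` {?a}" and ?Cb = "?R `` {?b}"
  let ?Q = "V // ?R"
  have CaQ: "?Ca \<in> ?Q" using a by (simp add: quotientI)
  have CbQ: "?Cb \<in> ?Q" using b by (simp add: quotientI)
  have neq: "?Ca \<noteq> ?Cb" using comp_eq_iff[OF a b, of ends F] False unfolding comp_def by blast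
  have finQ: "finite ?Q" unfolding quotient_def using fin by simp
  have aCa: "?a \<in> ?Ca" using conn_refl[OF a] by simp
  have bCb: "?b \<in> ?Cb" using conn_refl[OF b] by simp
  have Q': "V // conn V ends (insert g F) = insert (?Ca \<union> ?Cb) (?Q - {?Ca, ?Cb})"
  proof (intro set_eqI iffI)
    fix X assume "X \<in> V // conn V ends (insert g F)"
    then obtain p where p: "p \<in> V" "X = conn V ends (insert g F) `` {p}" by (auto elim: quotientE)
    show "X \<in> insert (?Ca \<union> ?Cb) (?Q - {?Ca, ?Cb})"
    proof (cases "p \<in> ?Ca \<union> ?Cb")
      case True
      then show ?thesis using p class_insert[OF a b False p(1)] by simp
    next
      case False2: False
      have pp: "p \<in> ?R `` {p}" using conn_refl[OF p(1)] by simp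
      have "?R `` {p} \<noteq> ?Ca" using False2 pp by blast
      moreover have "?R `` {p} \<noteq> ?Cb" using False2 pp by blast
      moreover have "?R `` {p} \<in> ?Q" using p(1) by (simp add: quotientI)
      ultimately show ?thesis using p class_insert[OF a b False p(1)] False2 by simp
    qed
  next
    fix X assume X: "X \<in> insert (?Ca \<union> ?Cb) (?Q - {?Ca, ?Cb})"
    show "X \<in> V // conn V ends (insert g F)"
    proof (cases "X = ?Ca \<union> ?Cb")
      case True
      hence "conn V ends (insert g F) `` {?a} = X" using class_insert[OF a b False a] aCa by simp
      then show ?thesis using a quotientI[of ?a V "conn V ends (insert g F)"] by simp
    next
      case F2: False
      with X have XQ: "X \<in> ?Q" "X \<noteq> ?Ca" "X \<noteq> ?Cb" by auto
      then obtain p where p: "p \<in> V" "X = ?R `` {p}" by (auto elim: quotientE)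
      have "p \<notin> ?Ca" using p XQ class_eq_mem[of p V ends F ?a] by blast
      moreover have "p \<notin> ?Cb" using p XQ class_eq_mem[of p V ends F ?b] by blast
      ultimately have "conn V ends (insert g F) `` {p} = X" using class_insert[OF a b False p(1)] p by simp
      then show ?thesis using p quotientI[of p V "conn V ends (insert g F)"] by simp
    qed
  qed
  have notin: "?Ca \<union> ?Cb \<notin> ?Q - {?Ca, ?Cb}"
  proof
    assume as: "?Ca \<union> ?Cb \<in> ?Q - {?Ca, ?Cb}"
    hence "?Ca \<union> ?Cb \<in> ?Q" by blast
    then obtain p where p: "p \<in> V" "?Ca \<union> ?Cb = ?R `` {p}" by (rule quotientE)
    hence p3: "?R `` {p} \<noteq> ?Ca" using as by auto
    have "?a \<in> ?R `` {p}" using p(2) aCa by blast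
    hence "?R `` {p} = ?Ca" using class_eq_mem[of ?a V ends F p] by simp
    thus False using p3 by simp
  qed
  have c1: "card (V // conn V ends (insert g F)) = card (?Q - {?Ca, ?Cb}) + 1"
    unfolding Q' using card_insert_disjoint[OF _ notin] finQ by simp
  have c2: "card (?Q - {?Ca, ?Cb}) = card ?Q - 2" 
  proof -
    have "card (?Q - {?Ca, ?Cb}) = card ?Q - card {?Ca, ?Cb}"
      by (rule card_Diff_subset) (use CaQ CbQ in auto)
    thus ?thesis using neq by simp
  qed
  have c3: "card ?Q \<ge> 2"
  proof -
    have "{?Ca, ?Cb} \<subseteq> ?Q" using CaQ CbQ by auto
    from card_mono[OF finQ this] show ?thesis using neq by simp
  qed
  have "card (V // conn V ends (insert g F)) = card ?Q - 1" using c1 c2 c3 by simp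
  thus ?thesis using False c3 unfolding ncomp_def by simp
qed

lemma joins_eq_iff:
  "joins V ends F g = joins V ends F e \<longleftrightarrow>
    (comp V ends F (fst (ends g)) = comp V ends F (fst (ends e)) \<and> comp V ends F (snd (ends g)) = comp V ends F (snd (ends e))) \<or>
    (comp V ends F (fst (ends g)) = comp V ends F (snd (ends e)) \<and> comp V ends F (snd (ends g)) = comp V ends F (fst (ends e)))"
  unfolding joins_def by (rule doubleton_eq_iff)

lemma pi_lemma:
  assumes fin: "finite V"
    and ends: "\<forall>g\<in>E. fst (ends g) \<in> V \<and> snd (ends g) \<in> V"
    and eE: "e \<in> E" and fE: "f \<in> E" and G: "G \<subseteq> E - {e, f}"
  shows "real (ncomp V ends (insert f (insert e G))) + real (ncomp V ends G)
       - real (ncomp V ends (insert e G)) - real (ncomp V ends (insert f G))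
     = (if paracel V E ends e f G then 1 else 0)"
proof -
  obtain ua ub where e: "ends e = (ua, ub)" by (cases "ends e")
  obtain fa fb where f: "ends f = (fa, fb)" by (cases "ends f")
  have V: "ua \<in> V" "ub \<in> V" "fa \<in> V" "fb \<in> V" using ends eE fE e f by force+
  let ?C = "comp V ends G"
  have k1: "real (ncomp V ends (insert e G)) = real (ncomp V ends G) - (if ?C ua = ?C ub then 0 else 1)"
    using ncomp_insert[of V ends e G] fin V e comp_eq_iff[of ua V ub ends G] by simp
  have k2: "real (ncomp V ends (insert f G)) = real (ncomp V ends G) - (if ?C fa = ?C fb then 0 else 1)"
    using ncomp_insert[of V ends f G] fin V f comp_eq_iff[of fa V fb ends G] by simp
  have X: "(fa, fb) \<in> conn V ends (insert e G) \<longleftrightarrow>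
     ?C fa = ?C fb \<or> (?C fa = ?C ua \<and> ?C ub = ?C fb) \<or> (?C fa = ?C ub \<and> ?C ua = ?C fb)"
    using conn_insert[of ends e V fa fb G] V e
      comp_eq_iff[of fa V fb ends G] comp_eq_iff[of fa V ua ends G] comp_eq_iff[of ub V fb ends G]
      comp_eq_iff[of fa V ub ends G] comp_eq_iff[of ua V fb ends G] by simp
  have k3: "real (ncomp V ends (insert f (insert e G))) = real (ncomp V ends (insert e G))
     - (if (fa, fb) \<in> conn V ends (insert e G) then 0 else 1)"
    using ncomp_insert[of V ends f "insert e G"] fin V f by simp
  have P: "paracel V E ends e f G \<longleftrightarrow> ?C ua \<noteq> ?C ub \<and>
      ((?C fa = ?C ua \<and> ?C fb = ?C ub) \<or> (?C fa = ?C ub \<and> ?C fb = ?C ua))"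
    unfolding paracel_def joins_eq_iff using G e f by simp
  show ?thesis
    unfolding k3 k1 k2 X P by auto
qed

lemma pderiv_sum_gen: "pderiv (sum p A) = (\<Sum>a\<in>A. pderiv (p a))"
  by (induction A rule: infinite_finite_induct) (auto simp: pderiv_add)

lemma poly_sum_monom_1:
  "poly (\<Sum>G\<in>S. monom (a G) (n G)) (1::real) = (\<Sum>G\<in>S. a G)"
  by (simp add: poly_sum poly_monom)

lemma poly_pderiv_sum_monom_1:
  "poly (pderiv (\<Sum>G\<in>S. monom (a G) (n G))) (1::real) = (\<Sum>G\<in>S. a G * real (n G))"
  by (simp add: pderiv_sum_gen poly_sum pderiv_monom poly_monom mult.commute)

lemma TAB_reindex:
  assumes "inj_on h (Pow Ef)" and "{F. F \<subseteq> E \<and> A \<subseteq> F \<and> F \<inter> B = {}} = h ` Pow Ef"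
  shows "TAB V E ends x A B = (\<Sum>G\<in>Pow Ef. monom (monoF x (h G)) (ncomp V ends (h G)))"
  unfolding TAB_def assms(2) using sum.reindex[OF assms(1)] by (simp add: comp_def)

lemma monoF_insert: "finite G \<Longrightarrow> g \<notin> G \<Longrightarrow> monoF x (insert g G) = x g * monoF x G"
  unfolding monoF_def by simp

lemma set1:
  assumes "e \<in> E" "e \<noteq> f"
  shows "{F. F \<subseteq> E \<and> {e} \<subseteq> F \<and> F \<inter> {f} = {}} = insert e ` Pow (E - {e, f})"
proof (intro set_eqI iffI)
  fix F assume "F \<in> {F. F \<subseteq> E \<and> {e} \<subseteq> F \<and> F \<inter> {f} = {}}"
  hence "F = insert e (F - {e})" "F - {e} \<in> Pow (E - {e, f})" by auto
  thus "F \<in> insert e ` Pow (E - {e, f})" by (metis image_eqI)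
qed (use assms in auto)

lemma set3:
  assumes "e \<in> E" "f \<in> E"
  shows "{F. F \<subseteq> E \<and> {e, f} \<subseteq> F \<and> F \<inter> {} = {}} = (\<lambda>G. insert f (insert e G)) ` Pow (E - {e, f})"
proof (intro set_eqI iffI)
  fix F assume "F \<in> {F. F \<subseteq> E \<and> {e, f} \<subseteq> F \<and> F \<inter> {} = {}}"
  hence "F = insert f (insert e (F - {e, f}))" "F - {e, f} \<in> Pow (E - {e, f})" by auto
  thus "F \<in> (\<lambda>G. insert f (insert e G)) ` Pow (E - {e, f})" by (metis image_eqI)
qed (use assms in auto)

lemma set4:
  shows "{F. F \<subseteq> E \<and> {} \<subseteq> F \<and> F \<inter> {e, f} = {}} = id ` Pow (E - {e, f})"
  by auto

lemma inj1: "inj_on (insert e) (Pow (E - {e, f}))"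
  unfolding inj_on_def by blast

lemma inj3: "inj_on (\<lambda>G. insert f (insert e G)) (Pow (E - {e, f}))"
  unfolding inj_on_def by blast

lemma LHS_value:
  fixes V :: "'v set" and E :: "'e set" and ends :: "'e \<Rightarrow> 'v \<times> 'v" and e f :: 'e
    and x :: "'e \<Rightarrow> real"
  assumes fin: "finite V" and finE: "finite E"
    and ends: "\<forall>g\<in>E. fst (ends g) \<in> V \<and> snd (ends g) \<in> V"
    and eE: "e \<in> E" and fE: "f \<in> E" and ef: "e \<noteq> f"
    and pos: "\<forall>g\<in>E. x g > 0"
  shows "poly (Mef V E ends x e f) 1 =
     (\<Sum>G\<in>Pow (E - {e, f}). monoF x G) * (\<Sum>G\<in>{G \<in> Pow (E - {e, f}). paracel V E ends e f G}. monoF x G)"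
proof -
  let ?Ef = "E - {e, f}"
  let ?P = "Pow ?Ef"
  let ?k = "\<lambda>F. ncomp V ends F"
  let ?m = "monoF x"
  define Z where "Z = (\<Sum>G\<in>?P. ?m G)"
  define K0 where "K0 = (\<Sum>G\<in>?P. ?m G * real (?k G))"
  define Ke where "Ke = (\<Sum>G\<in>?P. ?m G * real (?k (insert e G)))"
  define Kf where "Kf = (\<Sum>G\<in>?P. ?m G * real (?k (insert f G)))"
  define Kef where "Kef = (\<Sum>G\<in>?P. ?m G * real (?k (insert f (insert e G))))"
  have finG: "\<And>G. G \<in> ?P \<Longrightarrow> finite G"
  proof -
    fix G assume "G \<in> ?P" hence "G \<subseteq> E" by auto
    thus "finite G" using finite_subset finE by auto
  qed
  have me: "\<And>G. G \<in> ?P \<Longrightarrow> ?m (insert e G) = x e * ?m G"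
  proof -
    fix G assume G: "G \<in> ?P" thus "?m (insert e G) = x e * ?m G" using monoF_insert[OF finG[OF G], where g=e and x=x] by auto
  qed
  have mf: "\<And>G. G \<in> ?P \<Longrightarrow> ?m (insert f G) = x f * ?m G"
  proof -
    fix G assume G: "G \<in> ?P" thus "?m (insert f G) = x f * ?m G" using monoF_insert[OF finG[OF G], where g=f and x=x] by auto
  qed
  have mef: "\<And>G. G \<in> ?P \<Longrightarrow> ?m (insert f (insert e G)) = x e * x f * ?m G"
  proof -
    fix G assume G: "G \<in> ?P"
    have fin': "finite (insert e G)" using finG[OF G] by simp
    have nf: "f \<notin> insert e G" using ef G by auto
    have "?m (insert f (insert e G)) = x f * ?m (insert e G)" by (rule monoF_insert[OF fin' nf])
    thus "?m (insert f (insert e G)) = x e * x f * ?m G" using me[OF G] by simp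
  qed
  have T1: "TAB V E ends x {e} {f} = (\<Sum>G\<in>?P. monom (?m (insert e G)) (?k (insert e G)))"
    by (rule TAB_reindex[OF inj1 set1[OF eE ef]])
  have T2: "TAB V E ends x {f} {e} = (\<Sum>G\<in>?P. monom (?m (insert f G)) (?k (insert f G)))"
  proof -
    have st: "{F. F \<subseteq> E \<and> {f} \<subseteq> F \<and> F \<inter> {e} = {}} = insert f ` ?P"
      using set1[of f E e] fE ef by (simp add: insert_commute)
    have ij: "inj_on (insert f) ?P" unfolding inj_on_def by blast
    show ?thesis by (rule TAB_reindex[OF ij st])
  qed
  have T3: "TAB V E ends x {e, f} {} = (\<Sum>G\<in>?P. monom (?m (insert f (insert e G))) (?k (insert f (insert e G))))"
    by (rule TAB_reindex[OF inj3 set3[OF eE fE]])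
  have T4: "TAB V E ends x {} {e, f} = (\<Sum>G\<in>?P. monom (?m G) (?k G))"
    using TAB_reindex[OF inj_on_id set4] by simp
  have p1: "poly (TAB V E ends x {e} {f}) 1 = x e * Z" "poly (pderiv (TAB V E ends x {e} {f})) 1 = x e * Ke"
  proof -
    have "poly (TAB V E ends x {e} {f}) 1 = (\<Sum>G\<in>?P. ?m (insert e G))" unfolding T1 poly_sum_monom_1 ..
    also have "\<dots> = (\<Sum>G\<in>?P. x e * ?m G)" by (rule sum.cong[OF refl]) (rule me)
    finally show "poly (TAB V E ends x {e} {f}) 1 = x e * Z" unfolding Z_def by (simp add: sum_distrib_left)
    have "poly (pderiv (TAB V E ends x {e} {f})) 1 = (\<Sum>G\<in>?P. ?m (insert e G) * real (?k (insert e G)))"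
      unfolding T1 poly_pderiv_sum_monom_1 ..
    also have "\<dots> = (\<Sum>G\<in>?P. x e * (?m G * real (?k (insert e G))))" by (rule sum.cong[OF refl]) (simp add: me)
    finally show "poly (pderiv (TAB V E ends x {e} {f})) 1 = x e * Ke" unfolding Ke_def by (simp add: sum_distrib_left)
  qed
  have p2: "poly (TAB V E ends x {f} {e}) 1 = x f * Z" "poly (pderiv (TAB V E ends x {f} {e})) 1 = x f * Kf"
  proof -
    have "poly (TAB V E ends x {f} {e}) 1 = (\<Sum>G\<in>?P. ?m (insert f G))" unfolding T2 poly_sum_monom_1 ..
    also have "\<dots> = (\<Sum>G\<in>?P. x f * ?m G)" by (rule sum.cong[OF refl]) (rule mf)
    finally show "poly (TAB V E ends x {f} {e}) 1 = x f * Z" unfolding Z_def by (simp add: sum_distrib_left)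
    have "poly (pderiv (TAB V E ends x {f} {e})) 1 = (\<Sum>G\<in>?P. ?m (insert f G) * real (?k (insert f G)))"
      unfolding T2 poly_pderiv_sum_monom_1 ..
    also have "\<dots> = (\<Sum>G\<in>?P. x f * (?m G * real (?k (insert f G))))" by (rule sum.cong[OF refl]) (simp add: mf)
    finally show "poly (pderiv (TAB V E ends x {f} {e})) 1 = x f * Kf" unfolding Kf_def by (simp add: sum_distrib_left)
  qed
  have p3: "poly (TAB V E ends x {e, f} {}) 1 = x e * x f * Z" "poly (pderiv (TAB V E ends x {e, f} {})) 1 = x e * x f * Kef"
  proof -
    have "poly (TAB V E ends x {e, f} {}) 1 = (\<Sum>G\<in>?P. ?m (insert f (insert e G)))" unfolding T3 poly_sum_monom_1 ..
    also have "\<dots> = (\<Sum>G\<in>?P. x e * x f * ?m G)" by (rule sum.cong[OF refl]) (rule mef)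
    finally show "poly (TAB V E ends x {e, f} {}) 1 = x e * x f * Z" unfolding Z_def by (simp add: sum_distrib_left)
    have "poly (pderiv (TAB V E ends x {e, f} {})) 1 = (\<Sum>G\<in>?P. ?m (insert f (insert e G)) * real (?k (insert f (insert e G))))"
      unfolding T3 poly_pderiv_sum_monom_1 ..
    also have "\<dots> = (\<Sum>G\<in>?P. x e * x f * (?m G * real (?k (insert f (insert e G)))))" by (rule sum.cong[OF refl]) (simp add: mef)
    finally show "poly (pderiv (TAB V E ends x {e, f} {})) 1 = x e * x f * Kef" unfolding Kef_def by (simp add: sum_distrib_left)
  qed
  have p4: "poly (TAB V E ends x {} {e, f}) 1 = Z" "poly (pderiv (TAB V E ends x {} {e, f})) 1 = K0"
    unfolding T4 poly_sum_monom_1 poly_pderiv_sum_monom_1 Z_def K0_def by simp_all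
  define N where "N = TAB V E ends x {e} {f} * TAB V E ends x {f} {e} - TAB V E ends x {e, f} {} * TAB V E ends x {} {e, f}"
  define c where "c = x e * x f"
  have c0: "c > 0" unfolding c_def using pos eE fE by simp
  have "poly N 1 = 0" unfolding N_def using p1 p2 p3 p4 by simp
  hence "[:-1, 1:] dvd N" using poly_eq_0_iff_dvd[of N 1] by simp
  then obtain R where R: "N = [:-1, 1:] * R" by (elim dvdE)
  have d: "[: c, - c :] = smult (- c) [:-1, 1:]" by simp
  have "N = [: c, - c :] * smult (- 1 / c) R" unfolding R d using c0 by (simp add: field_simps)
  hence Ndiv: "N div [: c, - c :] = smult (- 1 / c) R"
    using c0 by (metis nonzero_mult_div_cancel_left pCons_eq_0_iff less_irrefl neg_equal_0_iff_equal)
  have pR: "poly R 1 = poly (pderiv N) 1" unfolding R by (simp add: pderiv_diff pderiv_pCons)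
  have pN': "poly (pderiv N) 1 = c * Z * (Ke + Kf - Kef - K0)"
    unfolding N_def pderiv_diff pderiv_mult using p1 p2 p3 p4 unfolding c_def by (simp add: algebra_simps)
  have M: "poly (Mef V E ends x e f) 1 = Z * (Kef + K0 - Ke - Kf)"
    unfolding Mef_def N_def[symmetric] c_def[symmetric] Ndiv using pR pN' c0 by (simp add: field_simps)
  have "Kef + K0 - Ke - Kf = (\<Sum>G\<in>?P. ?m G * (real (?k (insert f (insert e G))) + real (?k G)
       - real (?k (insert e G)) - real (?k (insert f G))))"
    unfolding Kef_def K0_def Ke_def Kf_def by (simp add: sum_subtractf sum.distrib algebra_simps)
  also have "\<dots> = (\<Sum>G\<in>?P. ?m G * (if paracel V E ends e f G then 1 else 0))"
    by (rule sum.cong[OF refl]) (subst pi_lemma[OF fin ends eE fE], auto)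
  also have "\<dots> = (\<Sum>G\<in>?P. if paracel V E ends e f G then ?m G else 0)"
    by (rule sum.cong) auto
  also have "\<dots> = (\<Sum>G\<in>{G \<in> ?P. paracel V E ends e f G}. ?m G)"
    by (rule sum.inter_filter[symmetric]) (simp add: finE)
  finally show ?thesis using M Z_def by simp
qed

lemma closed_rt:
  assumes "(p,q) \<in> R\<^sup>*" "p \<in> S" "\<And>a b. (a,b) \<in> R \<Longrightarrow> a \<in> S \<Longrightarrow> b \<in> S"
  shows "q \<in> S"
  using assms(1,2)
proof (induction rule: rtrancl_induct)
  case base then show ?case .
next
  case (step y z) then show ?case using assms(3) by blast
qed

lemma adj_Un: "adj ends (H \<union> W) = adj ends H \<union> adj ends W"
  unfolding adj_def by blast

lemma adj_cases: "(p,q) \<in> adj ends W \<Longrightarrow> \<exists>w\<in>W. (p = fst (ends w) \<and> q = snd (ends w)) \<or> (p = snd (ends w) \<and> q = fst (ends w))"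
  unfolding adj_def by blast

locale gr =
  fixes V :: "'v set" and E :: "'e set" and ends :: "'e \<Rightarrow> 'v \<times> 'v" and e f :: 'e
  assumes finV: "finite V" and finE: "finite E"
    and endsV: "\<forall>g\<in>E. fst (ends g) \<in> V \<and> snd (ends g) \<in> V"
    and eE: "e \<in> E" and fE: "f \<in> E" and ef: "e \<noteq> f"
begin

abbreviation "Ef \<equiv> E - {e, f}"
abbreviation "ua \<equiv> fst (ends e)"
abbreviation "ub \<equiv> snd (ends e)"
abbreviation "cn H \<equiv> conn V ends H"

definition jc :: "'e set \<Rightarrow> 'e \<Rightarrow> bool" where
  "jc H g \<longleftrightarrow> ((fst (ends g), ua) \<in> cn H \<and> (snd (ends g), ub) \<in> cn H) \<or>
              ((fst (ends g), ub) \<in> cn H \<and> (snd (ends g), ua) \<in> cn H)"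

definition tc :: "'e set \<Rightarrow> 'e \<Rightarrow> bool" where
  "tc H w \<longleftrightarrow> (ua, fst (ends w)) \<in> cn H \<or> (ua, snd (ends w)) \<in> cn H"

lemma endsV': "g \<in> E \<Longrightarrow> fst (ends g) \<in> V" "g \<in> E \<Longrightarrow> snd (ends g) \<in> V"
  using endsV by auto

lemma uaV: "ua \<in> V" and ubV: "ub \<in> V" using endsV' eE by auto

lemma joins_jc: assumes "g \<in> E" shows "joins V ends H g = joins V ends H e \<longleftrightarrow> jc H g"
  unfolding joins_eq_iff jc_def
  using comp_eq_iff[OF endsV'(1)[OF assms] uaV, of ends H] comp_eq_iff[OF endsV'(2)[OF assms] ubV, of ends H]
    comp_eq_iff[OF endsV'(1)[OF assms] ubV, of ends H] comp_eq_iff[OF endsV'(2)[OF assms] uaV, of ends H]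
  by simp

lemma paracel_iff: "paracel V E ends e f H \<longleftrightarrow> H \<subseteq> Ef \<and> (ua, ub) \<notin> cn H \<and> jc H f"
  unfolding paracel_def using joins_jc[OF fE, of H] comp_eq_iff[OF uaV ubV, of ends H] by auto

lemma smoot_iff: "smoot V E ends e f H g \<longleftrightarrow> g \<in> Ef - H \<and> jc H g"
  unfolding smoot_def using joins_jc[of g H] by auto

lemma jc_mono: "H \<subseteq> H' \<Longrightarrow> jc H g \<Longrightarrow> jc H' g"
  unfolding jc_def using conn_mono[of H H' V ends] by blast

lemma adj_conn: assumes "H \<subseteq> E" "(p,q) \<in> adj ends H" shows "(p,q) \<in> cn H"
proof -
  from assms(2) obtain w where w: "w \<in> H" "(p = fst (ends w) \<and> q = snd (ends w)) \<or> (p = snd (ends w) \<and> q = fst (ends w))"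
    using adj_cases[of p q ends H] by blast
  have wE: "w \<in> E" using w(1) assms(1) by blast
  have "(fst (ends w), snd (ends w)) \<in> cn H" by (rule conn_edge[where ends=ends and V=V and F=H and g=w, OF w(1) endsV'(1)[OF wE] endsV'(2)[OF wE]])
  thus ?thesis using w(2) conn_sym[of "fst (ends w)" "snd (ends w)" V ends H] by auto
qed

lemma KL:
  assumes par: "paracel V E ends e f H"
    and W: "W \<subseteq> Ef - H - {g. smoot V E ends e f H g}"
    and touch: "(\<forall>w\<in>W. tc H w) \<or> (\<forall>w\<in>W. \<not> tc H w)"
  shows "paracel V E ends e f (H \<union> W)"
proof -
  have HEf: "H \<subseteq> Ef" and nab: "(ua, ub) \<notin> cn H" and jf: "jc H f" using par paracel_iff[of H] by auto
  have HE: "H \<subseteq> E" using HEf by blast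
  have WE: "W \<subseteq> E" using W by blast
  have jf': "jc (H \<union> W) f" by (rule jc_mono[OF _ jf]) blast
  have nsm: "\<And>w. w \<in> W \<Longrightarrow> \<not> jc H w"
  proof -
    fix w assume "w \<in> W" thus "\<not> jc H w" using W smoot_iff[of H w] by auto
  qed
  have "(ua, ub) \<notin> cn (H \<union> W)"
  proof
    assume "(ua, ub) \<in> cn (H \<union> W)"
    hence rt: "(ua, ub) \<in> (adj ends (H \<union> W))\<^sup>*" unfolding conn_def by blast
    from touch show False
    proof
      assume all: "\<forall>w\<in>W. tc H w"
      let ?S = "cn H `` {ub}"
      have closed: "\<And>a b. (a,b) \<in> adj ends (H \<union> W) \<Longrightarrow> a \<in> ?S \<Longrightarrow> b \<in> ?S"
      proof -
        fix a b assume ab: "(a,b) \<in> adj ends (H \<union> W)" and aS: "a \<in> ?S"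
        have uba: "(ub, a) \<in> cn H" using aS by simp
        show "b \<in> ?S"
        proof (cases "(a,b) \<in> adj ends H")
          case True
          have "(a,b) \<in> cn H" by (rule adj_conn[OF HE True])
          thus ?thesis using conn_trans[OF uba] by simp
        next
          case False
          hence "(a,b) \<in> adj ends W" using ab adj_Un[of ends H W] by blast
          then obtain w where w: "w \<in> W" "(a = fst (ends w) \<and> b = snd (ends w)) \<or> (a = snd (ends w) \<and> b = fst (ends w))"
            using adj_cases[of a b ends W] by blast
          have twc: "tc H w" using all w(1) by blast
          have nj: "\<not> jc H w" using nsm[OF w(1)] .
          have nua: "(ua, a) \<notin> cn H"
          proof
            assume "(ua, a) \<in> cn H"
            hence "(ua, ub) \<in> cn H" using conn_trans[OF _ conn_sym[OF uba], of ua] by simp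
            thus False using nab by blast
          qed
          from w(2) show ?thesis
          proof
            assume w2: "a = fst (ends w) \<and> b = snd (ends w)"
            hence "(ua, b) \<in> cn H" using twc nua unfolding tc_def by blast
            hence "jc H w" unfolding jc_def using w2 conn_sym[OF uba] conn_sym[of ua b V ends H] by blast
            thus ?thesis using nj by blast
          next
            assume w2: "a = snd (ends w) \<and> b = fst (ends w)"
            hence "(ua, b) \<in> cn H" using twc nua unfolding tc_def by blast
            hence "jc H w" unfolding jc_def using w2 conn_sym[OF uba] conn_sym[of ua b V ends H] by blast
            thus ?thesis using nj by blast
          qed
        qed
      qed
      have "(ub, ua) \<in> (adj ends (H \<union> W))\<^sup>*" using rtr_sym[OF rt] .
      moreover have "ub \<in> ?S" using conn_refl[OF ubV] by simp
      ultimately have "ua \<in> ?S" using closed_rt[of ub ua "adj ends (H \<union> W)" ?S] closed by blast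
      hence "(ub, ua) \<in> cn H" by simp
      thus False using nab conn_sym[of ub ua V ends H] by simp
    next
      assume none: "\<forall>w\<in>W. \<not> tc H w"
      let ?S = "cn H `` {ua}"
      have closed: "\<And>a b. (a,b) \<in> adj ends (H \<union> W) \<Longrightarrow> a \<in> ?S \<Longrightarrow> b \<in> ?S"
      proof -
        fix a b assume ab: "(a,b) \<in> adj ends (H \<union> W)" and aS: "a \<in> ?S"
        have uaa: "(ua, a) \<in> cn H" using aS by simp
        show "b \<in> ?S"
        proof (cases "(a,b) \<in> adj ends H")
          case True
          have "(a,b) \<in> cn H" by (rule adj_conn[OF HE True])
          thus ?thesis using conn_trans[OF uaa] by simp
        next
          case False
          hence "(a,b) \<in> adj ends W" using ab adj_Un[of ends H W] by blast
          then obtain w where w: "w \<in> W" "(a = fst (ends w) \<and> b = snd (ends w)) \<or> (a = snd (ends w) \<and> b = fst (ends w))"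
            using adj_cases[of a b ends W] by blast
          have "tc H w" unfolding tc_def using w(2) uaa by blast
          thus ?thesis using none w(1) by blast
        qed
      qed
      have "ua \<in> ?S" using conn_refl[OF uaV] by simp
      hence "ub \<in> ?S" using closed_rt[of ua ub "adj ends (H \<union> W)" ?S] closed rt by blast
      thus False using nab by simp
    qed
  qed
  moreover have "H \<union> W \<subseteq> Ef" using HEf W by blast
  ultimately show ?thesis using paracel_iff[of "H \<union> W"] jf' by simp
qed

lemma smoot_mono:
  assumes "smoot V E ends e f H g" "H \<subseteq> H'" "H' \<subseteq> Ef" "g \<notin> H'"
  shows "smoot V E ends e f H' g"
  using assms smoot_iff[of H g] smoot_iff[of H' g] jc_mono[of H H' g] by auto

end

context gr begin

definition Sm :: "'e set \<Rightarrow> 'e set" where "Sm H = {g. smoot V E ends e f H g}"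
definition Nn :: "'e set \<Rightarrow> 'e set" where "Nn H = Ef - H - Sm H"
abbreviation "AA \<equiv> compat_set V E ends e f"
definition gm :: "'e set \<Rightarrow> 'e set \<Rightarrow> 'e multiset" where
  "gm I W = mset_set I + mset_set I + mset_set W"

lemma AA_iff: "I \<in> AA \<beta> \<gamma> \<longleftrightarrow> I \<subseteq> Ef \<and> I \<inter> \<beta> = {} \<and> I \<inter> \<gamma> = {} \<and>
   paracel V E ends e f (\<gamma> \<union> I) \<and> \<beta> \<subseteq> Sm (\<gamma> \<union> I)"
  unfolding compat_set_def Sm_def by blast

lemma jc_edge_contra:
  assumes "paracel V E ends e f H'" "w \<in> H'" shows "\<not> jc H' w"
proof
  assume j: "jc H' w"
  have HEf: "H' \<subseteq> Ef" and nab: "(ua, ub) \<notin> cn H'" using assms(1) paracel_iff[of H'] by auto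
  have wE: "w \<in> E" using HEf assms(2) by blast
  have ed: "(fst (ends w), snd (ends w)) \<in> cn H'"
    by (rule conn_edge[where ends=ends and V=V and F=H' and g=w, OF assms(2) endsV'(1)[OF wE] endsV'(2)[OF wE]])
  from j show False unfolding jc_def
  proof (elim disjE conjE)
    assume a1: "(fst (ends w), ua) \<in> cn H'" and a2: "(snd (ends w), ub) \<in> cn H'"
    have u1: "(ua, snd (ends w)) \<in> cn H'" using conn_trans[OF conn_sym[OF a1] ed] .
    have "(ua, ub) \<in> cn H'" by (rule conn_trans[OF u1 a2])
    with nab show False by (rule notE)
  next
    assume a1: "(fst (ends w), ub) \<in> cn H'" and a2: "(snd (ends w), ua) \<in> cn H'"
    have u1: "(ua, fst (ends w)) \<in> cn H'" using conn_trans[OF conn_sym[OF a2] conn_sym[OF ed]] .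
    have "(ua, ub) \<in> cn H'" by (rule conn_trans[OF u1 a1])
    with nab show False by (rule notE)
  qed
qed

lemma finite_sub: "X \<subseteq> E \<Longrightarrow> finite X"
  using finite_subset finE by auto

lemma B_sub:
  assumes \<beta>: "\<beta> \<subseteq> Ef" and \<gamma>: "\<gamma> \<subseteq> Ef" and bg: "\<beta> \<inter> \<gamma> = {}"
  shows "Bset V E ends e f \<beta> \<gamma> \<subseteq> (\<lambda>(I,W). gm I W) ` Sigma (AA \<beta> \<gamma>) (\<lambda>I. Pow (Nn (\<gamma> \<union> I)))"
proof
  fix m assume "m \<in> Bset V E ends e f \<beta> \<gamma>"
  then obtain \<alpha> \<alpha>' where m: "m = mset_set \<alpha> + mset_set \<alpha>'" and a: "\<alpha> \<in> AA \<beta> \<gamma>" and a': "\<alpha>' \<in> AA \<beta> \<gamma>"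
    and ai: "\<alpha> \<inter> \<alpha>' \<in> AA \<beta> \<gamma>"
    unfolding Bset_def by blast
  define I where "I = \<alpha> \<inter> \<alpha>'"
  define W where "W = (\<alpha> - \<alpha>') \<union> (\<alpha>' - \<alpha>)"
  have aEf: "\<alpha> \<subseteq> Ef" "\<alpha>' \<subseteq> Ef" using a a' AA_iff by auto
  have fa: "finite \<alpha>" "finite \<alpha>'" using aEf finite_sub[of \<alpha>] finite_sub[of \<alpha>'] by auto
  have pa: "paracel V E ends e f (\<gamma> \<union> \<alpha>)" "paracel V E ends e f (\<gamma> \<union> \<alpha>')" using a a' AA_iff by auto
  have ag: "\<alpha> \<inter> \<gamma> = {}" "\<alpha>' \<inter> \<gamma> = {}" using a a' AA_iff by auto
  have IA: "I \<in> AA \<beta> \<gamma>" using ai I_def by simp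
  have WN: "W \<subseteq> Nn (\<gamma> \<union> I)"
  proof
    fix w assume wW: "w \<in> W"
    have "\<exists>\<alpha>1. \<alpha>1 \<in> {\<alpha>, \<alpha>'} \<and> w \<in> \<alpha>1 \<and> w \<notin> I" using wW unfolding W_def I_def by blast
    then obtain \<alpha>1 where a1: "\<alpha>1 \<in> {\<alpha>, \<alpha>'}" "w \<in> \<alpha>1" "w \<notin> I" by blast
    have p1: "paracel V E ends e f (\<gamma> \<union> \<alpha>1)" using a1(1) pa by auto
    have s1: "I \<subseteq> \<alpha>1" using a1(1) I_def by auto
    have e1: "\<alpha>1 \<subseteq> Ef" "\<alpha>1 \<inter> \<gamma> = {}" using a1(1) aEf ag by auto
    have nj: "\<not> jc (\<gamma> \<union> \<alpha>1) w" by (rule jc_edge_contra[OF p1]) (use a1 in blast)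
    have "\<not> jc (\<gamma> \<union> I) w"
    proof
      assume "jc (\<gamma> \<union> I) w"
      hence "jc (\<gamma> \<union> \<alpha>1) w" by (rule jc_mono[rotated]) (use s1 in blast)
      thus False using nj by simp
    qed
    hence "w \<notin> Sm (\<gamma> \<union> I)" unfolding Sm_def using smoot_iff[of "\<gamma> \<union> I" w] by simp
    moreover have "w \<in> Ef" "w \<notin> \<gamma>" "w \<notin> I" using a1 e1 by auto
    ultimately show "w \<in> Nn (\<gamma> \<union> I)" unfolding Nn_def by blast
  qed
  have m2: "m = gm I W"
  proof -
    have fI: "finite I" "finite (\<alpha> - \<alpha>')" "finite (\<alpha>' - \<alpha>)" using fa I_def by auto
    have "mset_set \<alpha> = mset_set I + mset_set (\<alpha> - \<alpha>')"
    proof -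
      have "\<alpha> = I \<union> (\<alpha> - \<alpha>')" "I \<inter> (\<alpha> - \<alpha>') = {}" unfolding I_def by auto
      thus ?thesis using mset_set_Union[OF fI(1) fI(2)] by simp
    qed
    moreover have "mset_set \<alpha>' = mset_set I + mset_set (\<alpha>' - \<alpha>)"
    proof -
      have "\<alpha>' = I \<union> (\<alpha>' - \<alpha>)" "I \<inter> (\<alpha>' - \<alpha>) = {}" unfolding I_def by auto
      thus ?thesis using mset_set_Union[OF fI(1) fI(3)] by simp
    qed
    moreover have "mset_set W = mset_set (\<alpha> - \<alpha>') + mset_set (\<alpha>' - \<alpha>)"
      unfolding W_def by (rule mset_set_Union[OF fI(2) fI(3)]) blast
    ultimately show ?thesis unfolding m gm_def by (simp add: add_ac)
  qed
  show "m \<in> (\<lambda>(I,W). gm I W) ` Sigma (AA \<beta> \<gamma>) (\<lambda>I. Pow (Nn (\<gamma> \<union> I)))"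
    using m2 IA WN by blast
qed

lemma B_sup:
  assumes \<beta>: "\<beta> \<subseteq> Ef" and \<gamma>: "\<gamma> \<subseteq> Ef" and bg: "\<beta> \<inter> \<gamma> = {}"
  shows "(\<lambda>(I,W). gm I W) ` Sigma (AA \<beta> \<gamma>) (\<lambda>I. Pow (Nn (\<gamma> \<union> I))) \<subseteq> Bset V E ends e f \<beta> \<gamma>"
proof
  fix m assume "m \<in> (\<lambda>(I,W). gm I W) ` Sigma (AA \<beta> \<gamma>) (\<lambda>I. Pow (Nn (\<gamma> \<union> I)))"
  then obtain p where p: "p \<in> Sigma (AA \<beta> \<gamma>) (\<lambda>I. Pow (Nn (\<gamma> \<union> I)))" "m = (\<lambda>(I,W). gm I W) p" by blast
  obtain I W where pIW: "p = (I, W)" by (cases p)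
  have m: "m = gm I W" and IA: "I \<in> AA \<beta> \<gamma>" and WN: "W \<subseteq> Nn (\<gamma> \<union> I)" using p pIW by auto
  define H where "H = \<gamma> \<union> I"
  define W1 where "W1 = {w \<in> W. tc H w}"
  define W2 where "W2 = W - W1"
  have I1: "I \<subseteq> Ef" "I \<inter> \<beta> = {}" "I \<inter> \<gamma> = {}" "paracel V E ends e f H" "\<beta> \<subseteq> Sm H"
    using IA AA_iff[of I \<beta> \<gamma>] H_def by auto
  have HEf: "H \<subseteq> Ef" using I1(1) \<gamma> H_def by blast
  have WN': "W \<subseteq> Ef - H - {g. smoot V E ends e f H g}" using WN unfolding Nn_def Sm_def H_def by blast
  have WSm: "W \<inter> Sm H = {}" using WN unfolding Nn_def H_def by blast
  have WH: "W \<inter> H = {}" using WN unfolding Nn_def H_def by blast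
  have W12: "W1 \<subseteq> W" "W2 \<subseteq> W" "W1 \<inter> W2 = {}" "W = W1 \<union> W2" unfolding W1_def W2_def by auto
  have t1: "\<forall>w\<in>W1. tc H w" unfolding W1_def by blast
  have t2: "\<forall>w\<in>W2. \<not> tc H w" unfolding W1_def W2_def by blast
  have mem: "\<And>Wi. Wi \<subseteq> W \<Longrightarrow> (\<forall>w\<in>Wi. tc H w) \<or> (\<forall>w\<in>Wi. \<not> tc H w) \<Longrightarrow> I \<union> Wi \<in> AA \<beta> \<gamma>"
  proof -
    fix Wi assume Wi: "Wi \<subseteq> W" and tt: "(\<forall>w\<in>Wi. tc H w) \<or> (\<forall>w\<in>Wi. \<not> tc H w)"
    have WiN: "Wi \<subseteq> Ef - H - {g. smoot V E ends e f H g}" using Wi WN' by blast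
    have par: "paracel V E ends e f (H \<union> Wi)" by (rule KL[OF I1(4) WiN tt])
    have eq: "\<gamma> \<union> (I \<union> Wi) = H \<union> Wi" unfolding H_def by blast
    have HWEf: "H \<union> Wi \<subseteq> Ef" using HEf WiN by blast
    have sm: "\<beta> \<subseteq> Sm (H \<union> Wi)"
    proof
      fix b assume b: "b \<in> \<beta>"
      have sb: "smoot V E ends e f H b" using I1(5) b unfolding Sm_def by blast
      have "b \<notin> H" using sb smoot_iff[of H b] by simp
      moreover have "b \<notin> Wi" using b I1(5) WSm Wi by blast
      ultimately have "b \<notin> H \<union> Wi" by blast
      hence "smoot V E ends e f (H \<union> Wi) b" using smoot_mono[OF sb _ HWEf] by blast
      thus "b \<in> Sm (H \<union> Wi)" unfolding Sm_def by blast
    qed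
    have "I \<union> Wi \<subseteq> Ef" using I1(1) WiN by blast
    moreover have "(I \<union> Wi) \<inter> \<beta> = {}" using I1(2) I1(5) WSm Wi by blast
    moreover have "(I \<union> Wi) \<inter> \<gamma> = {}" using I1(3) WH Wi unfolding H_def by blast
    ultimately show "I \<union> Wi \<in> AA \<beta> \<gamma>" unfolding AA_iff eq using par sm by blast
  qed
  have a1: "I \<union> W1 \<in> AA \<beta> \<gamma>" using mem[OF W12(1)] t1 by blast
  have a2: "I \<union> W2 \<in> AA \<beta> \<gamma>" using mem[OF W12(2)] t2 by blast
  have int: "(I \<union> W1) \<inter> (I \<union> W2) = I" using W12 WH unfolding H_def by blast
  have fin: "finite I" "finite W1" "finite W2"
    using I1(1) WN' W12 finite_sub[of I] finite_sub[of W1] finite_sub[of W2] by auto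
  have "mset_set (I \<union> W1) = mset_set I + mset_set W1"
    by (rule mset_set_Union[OF fin(1) fin(2)]) (use W12 WH H_def in blast)
  moreover have "mset_set (I \<union> W2) = mset_set I + mset_set W2"
    by (rule mset_set_Union[OF fin(1) fin(3)]) (use W12 WH H_def in blast)
  moreover have "mset_set W = mset_set W1 + mset_set W2"
    using mset_set_Union[OF fin(2) fin(3) W12(3)] W12(4) by simp
  ultimately have "m = mset_set (I \<union> W1) + mset_set (I \<union> W2)" unfolding m gm_def by (simp add: add_ac)
  moreover have "(I \<union> W1) \<inter> (I \<union> W2) \<in> AA \<beta> \<gamma>" using int IA by simp
  ultimately show "m \<in> Bset V E ends e f \<beta> \<gamma>" unfolding Bset_def using a1 a2 by blast
qed

end

context gr begin

lemma count_gm: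
  assumes "finite I" "finite W" "I \<inter> W = {}"
  shows "count (gm I W) a = (if a \<in> I then 2 else if a \<in> W then 1 else 0)"
  unfolding gm_def using assms by (auto simp: count_mset_set')

lemma set_gm:
  assumes "finite I" "finite W" "I \<inter> W = {}"
  shows "set_mset (gm I W) = I \<union> W"
  unfolding gm_def using assms by auto

lemma Nn_sub: "Nn H \<subseteq> Ef - H" unfolding Nn_def by blast

lemma Sigma_props:
  assumes "p \<in> Sigma (AA \<beta> \<gamma>) (\<lambda>I. Pow (Nn (\<gamma> \<union> I)))"
  shows "finite (fst p)" "finite (snd p)" "fst p \<inter> snd p = {}"
proof -
  have a: "fst p \<in> AA \<beta> \<gamma>" "snd p \<subseteq> Nn (\<gamma> \<union> fst p)" using assms by (auto simp: mem_Sigma_iff)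
  have "fst p \<subseteq> Ef" using a(1) AA_iff[of "fst p" \<beta> \<gamma>] by blast
  thus "finite (fst p)" using finite_sub[of "fst p"] by blast
  have "snd p \<subseteq> Ef - (\<gamma> \<union> fst p)" using a(2) Nn_sub[of "\<gamma> \<union> fst p"] by blast
  thus "finite (snd p)" "fst p \<inter> snd p = {}" using finite_sub[of "snd p"] by blast+
qed

lemma gm_inj: "inj_on (\<lambda>(I,W). gm I W) (Sigma (AA \<beta> \<gamma>) (\<lambda>I. Pow (Nn (\<gamma> \<union> I))))"
proof (rule inj_onI)
  fix p q assume p: "p \<in> Sigma (AA \<beta> \<gamma>) (\<lambda>I. Pow (Nn (\<gamma> \<union> I)))" and q: "q \<in> Sigma (AA \<beta> \<gamma>) (\<lambda>I. Pow (Nn (\<gamma> \<union> I)))"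
    and eq: "(\<lambda>(I,W). gm I W) p = (\<lambda>(I,W). gm I W) q"
  obtain I W where pIW: "p = (I,W)" by (cases p)
  obtain I' W' where qIW: "q = (I',W')" by (cases q)
  have P: "finite I" "finite W" "I \<inter> W = {}" using Sigma_props[OF p] pIW by auto
  have Q: "finite I'" "finite W'" "I' \<inter> W' = {}" using Sigma_props[OF q] qIW by auto
  have g: "gm I W = gm I' W'" using eq pIW qIW by simp
  have c: "\<And>a. count (gm I W) a = count (gm I' W') a" using g by simp
  have "I = I'"
  proof (intro set_eqI)
    fix a
    have h: "(if a \<in> I then 2 else if a \<in> W then 1 else 0) = (if a \<in> I' then 2 else if a \<in> W' then (1::nat) else 0)"
      using c[of a] unfolding count_gm[OF P, of a] count_gm[OF Q, of a] .
    show "a \<in> I \<longleftrightarrow> a \<in> I'"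
      using h by (cases "a \<in> I"; cases "a \<in> I'"; cases "a \<in> W"; cases "a \<in> W'"; simp)
  qed
  moreover have "W = W'"
  proof (intro set_eqI)
    fix a
    have h: "(if a \<in> I then 2 else if a \<in> W then 1 else 0) = (if a \<in> I' then 2 else if a \<in> W' then (1::nat) else 0)"
      using c[of a] unfolding count_gm[OF P, of a] count_gm[OF Q, of a] .
    have d: "a \<notin> I \<or> a \<notin> W" "a \<notin> I' \<or> a \<notin> W'" using P(3) Q(3) by blast+
    show "a \<in> W \<longleftrightarrow> a \<in> W'"
      using h d by (cases "a \<in> I"; cases "a \<in> I'"; cases "a \<in> W"; cases "a \<in> W'"; simp)
  qed
  ultimately show "p = q" using pIW qIW by simp
qed

lemma eval_gm:
  assumes "finite I" "finite W" "I \<inter> W = {}"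
  shows "eval_monomial x (gm I W) = monoF x I * monoF x I * monoF x W"
proof -
  have "eval_monomial x (gm I W) = (\<Prod>a\<in>I \<union> W. x a ^ count (gm I W) a)"
    unfolding eval_monomial_def set_gm[OF assms] ..
  also have "\<dots> = (\<Prod>a\<in>I. x a ^ count (gm I W) a) * (\<Prod>a\<in>W. x a ^ count (gm I W) a)"
    by (rule prod.union_disjoint) (use assms in auto)
  also have "(\<Prod>a\<in>I. x a ^ count (gm I W) a) = (\<Prod>a\<in>I. x a * x a)"
    by (rule prod.cong[OF refl]) (simp add: count_gm[OF assms] power2_eq_square)
  also have "(\<Prod>a\<in>W. x a ^ count (gm I W) a) = (\<Prod>a\<in>W. x a)"
    by (rule prod.cong[OF refl]) (use assms in \<open>auto simp: count_gm[OF assms]\<close>)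
  finally show ?thesis unfolding monoF_def by (simp add: prod.distrib)
qed

lemma sum_pow: "finite S \<Longrightarrow> (\<Sum>W\<in>Pow S. monoF x W) = (\<Prod>s\<in>S. 1 + x s)"
  using prod_add[of S x "\<lambda>_. 1"] unfolding monoF_def by (simp add: add.commute)

lemma finite_AA: "finite (AA \<beta> \<gamma>)"
proof -
  have s: "AA \<beta> \<gamma> \<subseteq> Pow Ef"
  proof
    fix I assume "I \<in> AA \<beta> \<gamma>" thus "I \<in> Pow Ef" using AA_iff[of I \<beta> \<gamma>] by blast
  qed
  have "finite (Pow Ef)" using finE by simp
  thus ?thesis using finite_subset[OF s] by blast
qed

lemma inner:
  assumes \<beta>: "\<beta> \<subseteq> Ef" and \<gamma>: "\<gamma> \<subseteq> Ef" and bg: "\<beta> \<inter> \<gamma> = {}"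
  shows "(\<Sum>m\<in>Bset V E ends e f \<beta> \<gamma>. eval_monomial x m) =
    (\<Sum>I\<in>AA \<beta> \<gamma>. monoF x I * monoF x I * (\<Prod>s\<in>Nn (\<gamma> \<union> I). 1 + x s))"
proof -
  let ?S = "Sigma (AA \<beta> \<gamma>) (\<lambda>I. Pow (Nn (\<gamma> \<union> I)))"
  have B: "Bset V E ends e f \<beta> \<gamma> = (\<lambda>(I,W). gm I W) ` ?S"
    using B_sub[OF assms] B_sup[OF assms] by blast
  have "(\<Sum>m\<in>Bset V E ends e f \<beta> \<gamma>. eval_monomial x m) = (\<Sum>p\<in>?S. eval_monomial x ((\<lambda>(I,W). gm I W) p))"
    unfolding B using sum.reindex[OF gm_inj[of \<beta> \<gamma>], of "eval_monomial x"] by (simp add: comp_def)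
  also have "\<dots> = (\<Sum>p\<in>?S. monoF x (fst p) * monoF x (fst p) * monoF x (snd p))"
  proof (rule sum.cong[OF refl])
    fix p assume p: "p \<in> ?S"
    obtain I W where pIW: "p = (I,W)" by (cases p)
    show "eval_monomial x ((\<lambda>(I,W). gm I W) p) = monoF x (fst p) * monoF x (fst p) * monoF x (snd p)"
      using eval_gm[OF Sigma_props[OF p]] pIW by simp
  qed
  also have "\<dots> = (\<Sum>I\<in>AA \<beta> \<gamma>. \<Sum>W\<in>Pow (Nn (\<gamma> \<union> I)). monoF x I * monoF x I * monoF x W)"
  proof -
    have fN: "\<And>I. finite (Pow (Nn (\<gamma> \<union> I)))"
    proof -
      fix I have "Nn (\<gamma> \<union> I) \<subseteq> E" unfolding Nn_def by blast
      thus "finite (Pow (Nn (\<gamma> \<union> I)))" using finite_sub by simp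
    qed
    show ?thesis using sum.Sigma[OF finite_AA, where B="\<lambda>I. Pow (Nn (\<gamma> \<union> I))" and g="\<lambda>I W. monoF x I * monoF x I * monoF x W"] fN
      by (simp add: split_def)
  qed
  also have "\<dots> = (\<Sum>I\<in>AA \<beta> \<gamma>. monoF x I * monoF x I * (\<Prod>s\<in>Nn (\<gamma> \<union> I). 1 + x s))"
  proof (rule sum.cong[OF refl])
    fix I
    have "Nn (\<gamma> \<union> I) \<subseteq> E" unfolding Nn_def by blast
    hence fN: "finite (Nn (\<gamma> \<union> I))" using finite_sub by simp
    show "(\<Sum>W\<in>Pow (Nn (\<gamma> \<union> I)). monoF x I * monoF x I * monoF x W) = monoF x I * monoF x I * (\<Prod>s\<in>Nn (\<gamma> \<union> I). 1 + x s)"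
      unfolding sum_distrib_left[symmetric] sum_pow[OF fN] ..
  qed
  finally show ?thesis .
qed

end

context gr begin

lemma Sm_sub: "Sm H \<subseteq> Ef - H" unfolding Sm_def using smoot_iff by blast

lemma finite_Ef_sub: "X \<subseteq> Ef \<Longrightarrow> finite X" using finite_sub by blast

lemma RHS_value:
  "(\<Sum>(\<beta>, \<gamma>)\<in>{(\<beta>, \<gamma>). \<beta> \<subseteq> Ef \<and> \<gamma> \<subseteq> Ef \<and> \<beta> \<inter> \<gamma> = {}}.
        monoF x \<beta> * monoF x \<gamma> * (\<Sum>m\<in>Bset V E ends e f \<beta> \<gamma>. eval_monomial x m))
   = (\<Sum>H\<in>{G \<in> Pow Ef. paracel V E ends e f G}. monoF x H) * (\<Prod>s\<in>Ef. 1 + x s)"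
proof -
  let ?BG = "{(\<beta>, \<gamma>). \<beta> \<subseteq> Ef \<and> \<gamma> \<subseteq> Ef \<and> \<beta> \<inter> \<gamma> = {}}"
  let ?PS = "{G \<in> Pow Ef. paracel V E ends e f G}"
  define Fp where "Fp = (\<lambda>(p::'e set \<times> 'e set) I. monoF x (fst p) * monoF x (snd p) *
      (monoF x I * monoF x I * (\<Prod>s\<in>Nn (snd p \<union> I). 1 + x s)))"
  define S where "S = Sigma ?BG (\<lambda>p. AA (fst p) (snd p))"
  define T where "T = Sigma ?PS (\<lambda>H. Pow H \<times> Pow (Sm H))"
  define h where "h = (\<lambda>(H::'e set, I::'e set, \<beta>::'e set). monoF x \<beta> * monoF x (H - I) *
      (monoF x I * monoF x I * (\<Prod>s\<in>Nn H. 1 + x s)))"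
  have finBG: "finite ?BG"
  proof -
    have "?BG \<subseteq> Pow Ef \<times> Pow Ef" by blast
    moreover have "finite (Pow Ef \<times> Pow Ef)" using finE by simp
    ultimately show ?thesis using finite_subset by blast
  qed
  have s1: "(\<Sum>(\<beta>, \<gamma>)\<in>?BG. monoF x \<beta> * monoF x \<gamma> * (\<Sum>m\<in>Bset V E ends e f \<beta> \<gamma>. eval_monomial x m))
      = (\<Sum>p\<in>?BG. \<Sum>I\<in>AA (fst p) (snd p). Fp p I)"
  proof (rule sum.cong[OF refl])
    fix p assume p: "p \<in> ?BG"
    obtain \<beta> \<gamma> where pbg: "p = (\<beta>, \<gamma>)" by (cases p)
    have a: "\<beta> \<subseteq> Ef" "\<gamma> \<subseteq> Ef" "\<beta> \<inter> \<gamma> = {}" using p pbg by auto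
    show "(case p of (\<beta>, \<gamma>) \<Rightarrow> monoF x \<beta> * monoF x \<gamma> * (\<Sum>m\<in>Bset V E ends e f \<beta> \<gamma>. eval_monomial x m))
        = (\<Sum>I\<in>AA (fst p) (snd p). Fp p I)"
    proof -
      have eq: "(\<Sum>m\<in>Bset V E ends e f \<beta> \<gamma>. eval_monomial x m) =
        (\<Sum>I\<in>AA \<beta> \<gamma>. monoF x I * monoF x I * (\<Prod>s\<in>Nn (\<gamma> \<union> I). 1 + x s))" by (rule inner[OF a])
      show ?thesis unfolding pbg Fp_def prod.case fst_conv snd_conv eq by (simp only: sum_distrib_left)
    qed
  qed
  have s2: "(\<Sum>p\<in>?BG. \<Sum>I\<in>AA (fst p) (snd p). Fp p I) = (\<Sum>q\<in>S. case_prod Fp q)"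
    unfolding S_def by (rule sum.Sigma[OF finBG]) (simp add: finite_AA)
  have s3: "(\<Sum>q\<in>S. case_prod Fp q) = (\<Sum>b\<in>T. h b)"
  proof (rule sum.reindex_bij_witness[where i="\<lambda>(H, I, \<beta>). ((\<beta>, H - I), I)" and j="\<lambda>((\<beta>, \<gamma>), I). (\<gamma> \<union> I, I, \<beta>)"])
    fix a assume a: "a \<in> S"
    obtain \<beta> \<gamma> I where aa: "a = ((\<beta>, \<gamma>), I)" by (metis prod.collapse)
    have c: "\<beta> \<subseteq> Ef" "\<gamma> \<subseteq> Ef" "\<beta> \<inter> \<gamma> = {}" "I \<in> AA \<beta> \<gamma>" using a aa unfolding S_def by auto
    have d: "I \<subseteq> Ef" "I \<inter> \<beta> = {}" "I \<inter> \<gamma> = {}" "paracel V E ends e f (\<gamma> \<union> I)" "\<beta> \<subseteq> Sm (\<gamma> \<union> I)"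
      using c(4) AA_iff[of I \<beta> \<gamma>] by auto
    have gi: "\<gamma> \<union> I - I = \<gamma>" using d(3) by blast
    show "(\<lambda>(H, I, \<beta>). ((\<beta>, H - I), I)) ((\<lambda>((\<beta>, \<gamma>), I). (\<gamma> \<union> I, I, \<beta>)) a) = a"
      unfolding aa using gi by simp
    show "(\<lambda>((\<beta>, \<gamma>), I). (\<gamma> \<union> I, I, \<beta>)) a \<in> T"
      unfolding aa T_def using c d by auto
    show "h ((\<lambda>((\<beta>, \<gamma>), I). (\<gamma> \<union> I, I, \<beta>)) a) = case_prod Fp a"
      unfolding aa h_def Fp_def using gi by simp
  next
    fix b assume b: "b \<in> T"
    obtain H I \<beta> where bb: "b = (H, I, \<beta>)" by (metis prod.collapse)
    have c: "H \<subseteq> Ef" "paracel V E ends e f H" "I \<subseteq> H" "\<beta> \<subseteq> Sm H" using b bb unfolding T_def by auto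
    have HI: "H - I \<union> I = H" using c(3) by blast
    show "(\<lambda>((\<beta>, \<gamma>), I). (\<gamma> \<union> I, I, \<beta>)) ((\<lambda>(H, I, \<beta>). ((\<beta>, H - I), I)) b) = b"
      unfolding bb using HI by simp
    have sm: "\<beta> \<subseteq> Ef - H" using c(4) Sm_sub[of H] by blast
    have "I \<in> AA \<beta> (H - I)"
      unfolding AA_iff HI using c sm by blast
    moreover have "\<beta> \<subseteq> Ef" "H - I \<subseteq> Ef" "\<beta> \<inter> (H - I) = {}" using sm c by blast+
    ultimately show "(\<lambda>(H, I, \<beta>). ((\<beta>, H - I), I)) b \<in> S"
      unfolding bb S_def by simp
  qed
  have finPS: "finite ?PS" using finE by simp
  have s4: "(\<Sum>b\<in>T. h b) = (\<Sum>H\<in>?PS. \<Sum>I\<in>Pow H. \<Sum>\<beta>\<in>Pow (Sm H).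
       monoF x \<beta> * monoF x (H - I) * (monoF x I * monoF x I * (\<Prod>s\<in>Nn H. 1 + x s)))"
  proof -
    have fin2: "\<forall>H\<in>?PS. finite (Pow H \<times> Pow (Sm H))"
    proof
      fix H assume "H \<in> ?PS"
      hence "H \<subseteq> Ef" by blast
      moreover have "Sm H \<subseteq> Ef" using Sm_sub[of H] by blast
      ultimately show "finite (Pow H \<times> Pow (Sm H))" using finite_Ef_sub by simp
    qed
    have "(\<Sum>b\<in>T. h b) = (\<Sum>H\<in>?PS. \<Sum>q\<in>Pow H \<times> Pow (Sm H). (\<lambda>(I, \<beta>). monoF x \<beta> * monoF x (H - I) *
        (monoF x I * monoF x I * (\<Prod>s\<in>Nn H. 1 + x s))) q)"
      unfolding T_def h_def by (rule sum.Sigma[OF finPS fin2, symmetric])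
    also have "\<dots> = (\<Sum>H\<in>?PS. \<Sum>I\<in>Pow H. \<Sum>\<beta>\<in>Pow (Sm H).
       monoF x \<beta> * monoF x (H - I) * (monoF x I * monoF x I * (\<Prod>s\<in>Nn H. 1 + x s)))"
      by (rule sum.cong[OF refl]) (rule sum.cartesian_product[symmetric])
    finally show ?thesis .
  qed
  have s5: "\<And>H. H \<in> ?PS \<Longrightarrow> (\<Sum>I\<in>Pow H. \<Sum>\<beta>\<in>Pow (Sm H).
       monoF x \<beta> * monoF x (H - I) * (monoF x I * monoF x I * (\<Prod>s\<in>Nn H. 1 + x s)))
     = monoF x H * (\<Prod>s\<in>Ef. 1 + x s)"
  proof -
    fix H assume H: "H \<in> ?PS"
    have HEf: "H \<subseteq> Ef" using H by blast
    have fH: "finite H" using finite_Ef_sub[OF HEf] .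
    have SmEf: "Sm H \<subseteq> Ef" using Sm_sub[of H] by blast
    have fS: "finite (Sm H)" using finite_Ef_sub[OF SmEf] .
    have NnEf: "Nn H \<subseteq> Ef" unfolding Nn_def by blast
    have fN: "finite (Nn H)" using finite_Ef_sub[OF NnEf] .
    have "(\<Sum>I\<in>Pow H. \<Sum>\<beta>\<in>Pow (Sm H).
       monoF x \<beta> * monoF x (H - I) * (monoF x I * monoF x I * (\<Prod>s\<in>Nn H. 1 + x s)))
      = (\<Sum>I\<in>Pow H. (\<Prod>s\<in>Sm H. 1 + x s) * (monoF x H * monoF x I * (\<Prod>s\<in>Nn H. 1 + x s)))"
    proof (rule sum.cong[OF refl])
      fix I assume I: "I \<in> Pow H"
      have mHI: "monoF x (H - I) * monoF x I = monoF x H"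
        unfolding monoF_def using prod.subset_diff[of I H x] I fH by simp
      have "(\<Sum>\<beta>\<in>Pow (Sm H). monoF x \<beta> * monoF x (H - I) * (monoF x I * monoF x I * (\<Prod>s\<in>Nn H. 1 + x s)))
          = (\<Sum>\<beta>\<in>Pow (Sm H). monoF x \<beta>) * (monoF x (H - I) * monoF x I * monoF x I * (\<Prod>s\<in>Nn H. 1 + x s))"
        by (simp add: sum_distrib_right mult.assoc)
      also have "\<dots> = (\<Prod>s\<in>Sm H. 1 + x s) * (monoF x H * monoF x I * (\<Prod>s\<in>Nn H. 1 + x s))"
        unfolding sum_pow[OF fS] mHI ..
      finally show "(\<Sum>\<beta>\<in>Pow (Sm H). monoF x \<beta> * monoF x (H - I) * (monoF x I * monoF x I * (\<Prod>s\<in>Nn H. 1 + x s)))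
          = (\<Prod>s\<in>Sm H. 1 + x s) * (monoF x H * monoF x I * (\<Prod>s\<in>Nn H. 1 + x s))" .
    qed
    also have "\<dots> = monoF x H * ((\<Sum>I\<in>Pow H. monoF x I) * (\<Prod>s\<in>Sm H. 1 + x s) * (\<Prod>s\<in>Nn H. 1 + x s))"
      by (simp add: sum_distrib_left sum_distrib_right algebra_simps)
    also have "\<dots> = monoF x H * ((\<Prod>s\<in>H. 1 + x s) * (\<Prod>s\<in>Sm H. 1 + x s) * (\<Prod>s\<in>Nn H. 1 + x s))"
      unfolding sum_pow[OF fH] ..
    also have "(\<Prod>s\<in>H. 1 + x s) * (\<Prod>s\<in>Sm H. 1 + x s) * (\<Prod>s\<in>Nn H. 1 + x s) = (\<Prod>s\<in>Ef. 1 + x s)"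
    proof -
      have d1: "H \<inter> Sm H = {}" using Sm_sub[of H] by blast
      have d2: "(H \<union> Sm H) \<inter> Nn H = {}" unfolding Nn_def by blast
      have u: "H \<union> Sm H \<union> Nn H = Ef" using HEf SmEf unfolding Nn_def by blast
      have "(\<Prod>s\<in>H. 1 + x s) * (\<Prod>s\<in>Sm H. 1 + x s) = (\<Prod>s\<in>H \<union> Sm H. 1 + x s)"
        by (rule prod.union_disjoint[symmetric, OF fH fS d1])
      moreover have "(\<Prod>s\<in>H \<union> Sm H. 1 + x s) * (\<Prod>s\<in>Nn H. 1 + x s) = (\<Prod>s\<in>H \<union> Sm H \<union> Nn H. 1 + x s)"
        by (rule prod.union_disjoint[symmetric]) (use fH fS fN d2 in auto)
      ultimately show ?thesis using u by simp
    qed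
    finally show "(\<Sum>I\<in>Pow H. \<Sum>\<beta>\<in>Pow (Sm H).
       monoF x \<beta> * monoF x (H - I) * (monoF x I * monoF x I * (\<Prod>s\<in>Nn H. 1 + x s)))
     = monoF x H * (\<Prod>s\<in>Ef. 1 + x s)" .
  qed
  have "(\<Sum>(\<beta>, \<gamma>)\<in>?BG. monoF x \<beta> * monoF x \<gamma> * (\<Sum>m\<in>Bset V E ends e f \<beta> \<gamma>. eval_monomial x m))
      = (\<Sum>H\<in>?PS. monoF x H * (\<Prod>s\<in>Ef. 1 + x s))"
    unfolding s1 s2 s3 s4 by (rule sum.cong[OF refl]) (rule s5)
  also have "\<dots> = (\<Sum>H\<in>?PS. monoF x H) * (\<Prod>s\<in>Ef. 1 + x s)" by (simp add: sum_distrib_right)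
  finally show ?thesis .
qed

end

theorem theorem3p5:
  fixes V :: "'v set" and E :: "'e set" and ends :: "'e \<Rightarrow> 'v \<times> 'v" and e f :: 'e
    and x :: "'e \<Rightarrow> real"
  assumes "finite V" and "finite E"
    and "\<forall>g\<in>E. fst (ends g) \<in> V \<and> snd (ends g) \<in> V"
    and "e \<in> E" and "f \<in> E" and "e \<noteq> f"
    and "\<forall>g\<in>E. x g > 0"
  shows "poly (Mef V E ends x e f) 1 =
    (\<Sum>(\<beta>, \<gamma>)\<in>{(\<beta>, \<gamma>). \<beta> \<subseteq> E - {e, f} \<and> \<gamma> \<subseteq> E - {e, f} \<and> \<beta> \<inter> \<gamma> = {}}.
        monoF x \<beta> * monoF x \<gamma> * (\<Sum>m\<in>Bset V E ends e f \<beta> \<gamma>. eval_monomial x m))"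
proof -
  interpret gr V E ends e f
    by (unfold_locales) (use assms in auto)
  have L: "poly (Mef V E ends x e f) 1 =
     (\<Sum>G\<in>Pow (E - {e, f}). monoF x G) * (\<Sum>G\<in>{G \<in> Pow (E - {e, f}). paracel V E ends e f G}. monoF x G)"
    by (rule LHS_value[OF assms])
  have Z: "(\<Sum>G\<in>Pow (E - {e, f}). monoF x G) = (\<Prod>s\<in>E - {e, f}. 1 + x s)"
    by (rule sum_pow) (simp add: assms(2))
  show ?thesis unfolding L Z RHS_value by (simp add: mult.commute)
qed

end
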